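(* Let $\pi=\pi_1\cdots\pi_n$ be a permutation of $\{1,\dots,n\}$. The Schröder insertion tableau $P(\pi)$ has a single row if and only if for all $1\le i\le n$: (1) if $i$ is odd, then $\pi_i$ is a left-to-right maximum of $\pi$, i.e. $\pi_i>\pi_j$ for all $j<i$; (2) if $i$ is even, then $\pi_i$ is a left-to-right maximum of the sequence obtained from $\pi$ by deleting $\pi_{i-1}$, i.e. $\pi_i>\pi_j$ for all $j<i$ with $j\ne i-1$.
   Context: A Schröder tableau consists of rows $1,2,\dots$; row $r$ has $\lambda_r$ cells at positions $1,\dots,\lambda_r$ (with $\lambda_1\ge\lambda_2\ge\cdots$), each filled with a number. Cells at odd positions are upper triangles, cells at even positions are lower triangles; positions $2m-1$ and $2m$ of a row are twins (they form one square). The Schröder insertion tableau $P(\pi)$ is built as follows. Start with $P$ having one row containing $\pi_1$ at position 1. For $k=2,\dots,n$, insert $\alpha=\pi_k$ into row $i=1$ by the rule: if row $i$ is empty or $\alpha$ is larger than all its entries, place $\alpha$ in a new cell at the end of row $i$ and stop. Otherwise let $j$ be the position in row $i$ of the smallest entry larger than $\alpha$. If $j$ is even (lower triangle): remove the entry $\beta$ at position $j$, write $\alpha$ there, and insert $\beta$ into row $i+1$ by the same rule. If $j$ is odd (upper triangle) and position $j+1$ exists in row $i$ with entry $\beta$: move the entry of position $j$ to position $j+1$, write $\alpha$ at position $j$, and insert $\beta$ into row $i+1$ by the same rule. If $j$ is odd and $j$ is the last position of row $i$: move the entry of position $j$ into a new cell at position $j+1$ at the end of row $i$, write $\alpha$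 at position $j$, and stop. The final $P$ is $P(\pi)$. *)

theory Defs
  imports Main
begin

(* Position p (1-based, as in the paper) of a row r is the list index p-1,
   so odd positions (upper triangles) are even indices, and even positions
   (lower triangles) are odd indices. *)

(* Insert alpha into a row.  Returns the new row and, if an entry is bumped,
   Some beta (to be inserted into the next row); None means "stop". *)
definition schroeder_row_insert :: "nat list \<Rightarrow> nat \<Rightarrow> nat list \<times> nat option" where
  "schroeder_row_insert r \<alpha> =
    (if r = [] \<or> (\<forall>x\<in>set r. x < \<alpha>) then (r @ [\<alpha>], None)
     else
       (let m = Min {x \<in> set r. \<alpha> < x};
            k = hd [i \<leftarrow> [0..<length r]. r ! i = m]
        in if odd k  \<comment> \<open>position k+1 is even: lower triangle\<close>
           then (r[k := \<alpha>], Some (r ! k))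
           else if Suc k < length r  \<comment> \<open>odd position, twin exists\<close>
           then (r[Suc k := r ! k, k := \<alpha>], Some (r ! Suc k))
           else (r[k := \<alpha>] @ [r ! k], None)))"

fun schroeder_insert :: "nat list list \<Rightarrow> nat \<Rightarrow> nat list list" where
  "schroeder_insert [] \<alpha> = [[\<alpha>]]"
| "schroeder_insert (r # rs) \<alpha> =
     (case schroeder_row_insert r \<alpha> of
        (r', None) \<Rightarrow> r' # rs
      | (r', Some \<beta>) \<Rightarrow> r' # schroeder_insert rs \<beta>)"

definition schroeder_P :: "nat list \<Rightarrow> nat list list" where
  "schroeder_P \<pi> = foldl schroeder_insert [[hd \<pi>]] (tl \<pi>)"

end

theory Submission
  imports Defs
begin

lemma ins_len: "length (schroeder_insert t a) \<ge> max 1 (length t)"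
proof (induction t arbitrary: a)
  case Nil then show ?case by simp
next
  case (Cons r rs)
  show ?case
  proof (cases "schroeder_row_insert r a")
    case (Pair r' b)
    then show ?thesis using Cons.IH by (cases b) auto
  qed
qed

lemma sd_last:
  assumes "sorted s" "distinct s" "s \<noteq> []" "x \<in> set (butlast s)"
  shows "x < last s"
proof -
  have e: "s = butlast s @ [last s]" using assms(3) by simp
  have "sorted (butlast s @ [last s])" "distinct (butlast s @ [last s])"
    using assms e by metis+
  then have "x \<le> last s" "x \<noteq> last s" using assms(4) by (auto simp: sorted_append)
  then show ?thesis by simp
qed

lemma row_ins:
  assumes s: "sorted s" "distinct s" "s \<noteq> []" "a \<notin> set s"
  shows "(snd (schroeder_row_insert s a) = None \<longleftrightarrow>
           (\<forall>x\<in>set s. x<a) \<or> (even (length s - 1) \<and> (\<forall>x\<in>set (butlast s). x<a)))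
       \<and> (snd (schroeder_row_insert s a) = None \<longrightarrow>
           sorted (fst (schroeder_row_insert s a)) \<and> distinct (fst (schroeder_row_insert s a))
           \<and> set (fst (schroeder_row_insert s a)) = insert a (set s))"
proof (cases "\<forall>x\<in>set s. x<a")
  case True
  then show ?thesis using s
    by (auto simp: schroeder_row_insert_def sorted_append less_imp_le)
next
  case False
  define L where "L = length s"
  define m where "m = Min {x \<in> set s. a < x}"
  define k where "k = hd [i \<leftarrow> [0..<length s]. s ! i = m]"
  have ex: "\<exists>x\<in>set s. a < x" using False s(4) by (force simp: not_less le_less)
  have fin: "finite {x \<in> set s. a < x}" "{x \<in> set s. a < x} \<noteq> {}" using ex by auto
  have mS: "m \<in> set s" "a < m" using Min_in[OF fin] m_def by auto
  have mmin: "\<And>x. x \<in> set s \<Longrightarrow> a < x \<Longrightarrow> m \<le> x" using Min_le fin(1) m_def by auto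
  have fne: "[i \<leftarrow> [0..<length s]. s ! i = m] \<noteq> []"
    using mS(1) by (auto simp: filter_empty_conv in_set_conv_nth)
  have kin: "k \<in> set [i \<leftarrow> [0..<length s]. s ! i = m]" unfolding k_def using fne by (rule hd_in_set)
  have k: "k < L" "s ! k = m" using kin unfolding L_def set_filter by auto
  have def: "schroeder_row_insert s a =
     (if odd k then (s[k := a], Some (s ! k))
      else if Suc k < length s then (s[Suc k := s ! k, k := a], Some (s ! Suc k))
      else (s[k := a] @ [s ! k], None))"
    using False s(3) unfolding schroeder_row_insert_def m_def k_def Let_def by auto
  have lastL: "last s = s ! (L - 1)" using s(3) L_def by (simp add: last_conv_nth)
  have key: "(\<forall>x\<in>set (butlast s). x<a) \<longleftrightarrow> k = L - 1"
  proof
    assume H: "\<forall>x\<in>set (butlast s). x<a"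
    have "m \<notin> set (butlast s)" using H mS by auto
    then have "m = last s" using mS(1) s(3)
      by (metis append_butlast_last_id butlast.simps(1) in_set_butlast_appendI last_in_set rotate1.simps(2) set_rotate1 set_ConsD)
    then have "s ! k = s ! (L - 1)" using k lastL by simp
    then show "k = L - 1" using s(2) k(1) L_def s(3) nth_eq_iff_index_eq
      by (metis diff_less length_greater_0_conv zero_less_one)
  next
    assume "k = L - 1"
    then have ml: "m = last s" using k lastL by simp
    show "\<forall>x\<in>set (butlast s). x<a"
    proof
      fix x assume x: "x \<in> set (butlast s)"
      have "x < last s" using sd_last[OF s(1-3) x] .
      moreover have "x \<in> set s" using x in_set_butlastD by metis
      ultimately show "x < a" using mmin ml s(4)
        by (metis leD linorder_neqE_nat)
    qed
  qed
  have none: "snd (schroeder_row_insert s a) = None \<longleftrightarrow> even k \<and> k = L - 1"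
    using def k(1) L_def by auto
  show ?thesis
  proof (intro conjI)
    show "snd (schroeder_row_insert s a) = None \<longleftrightarrow>
           (\<forall>x\<in>set s. x<a) \<or> (even (length s - 1) \<and> (\<forall>x\<in>set (butlast s). x<a))"
      using none key False L_def by auto
    show "snd (schroeder_row_insert s a) = None \<longrightarrow>
           sorted (fst (schroeder_row_insert s a)) \<and> distinct (fst (schroeder_row_insert s a))
           \<and> set (fst (schroeder_row_insert s a)) = insert a (set s)"
    proof
      assume N: "snd (schroeder_row_insert s a) = None"
      then have kk: "even k" "k = L - 1" using none by auto
      have bl: "\<forall>x\<in>set (butlast s). x<a" using key kk by simp
      have eqs: "s = butlast s @ [last s]" using s(3) by simp
      have f: "fst (schroeder_row_insert s a) = butlast s @ [a, last s]"
      proof -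
        have "s[k := a] = butlast s @ [a]" using kk L_def s(3)
          by (metis eqs length_butlast list_update_length)
        moreover have "fst (schroeder_row_insert s a) = s[k := a] @ [s ! k]"
          using def kk L_def k(1) by auto
        ultimately show ?thesis using k(2) kk lastL by simp
      qed
      have dl: "last s \<notin> set (butlast s)" using s(2) eqs
        by (metis distinct_append not_distinct_conv_prefix) 
      have db: "distinct (butlast s)" using s(2) by (simp add: distinct_butlast)
      have al: "a < last s" using mS k kk lastL by simp
      have sb: "sorted (butlast s)" using s(1) by (simp add: sorted_butlast)
      have st: "set s = insert (last s) (set (butlast s))" using eqs by (metis list.simps(15) rotate1.simps(2) set_rotate1)
      show "sorted (fst (schroeder_row_insert s a)) \<and> distinct (fst (schroeder_row_insert s a))
           \<and> set (fst (schroeder_row_insert s a)) = insert a (set s)"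
        unfolding f using bl al db dl sb st s(4) sd_last[OF s(1-3)]
        by (auto simp: sorted_append less_imp_le)
    qed
  qed
qed


lemma set_butlast_d: "distinct xs \<Longrightarrow> xs \<noteq> [] \<Longrightarrow> set (butlast xs) = set xs - {last xs}"
proof -
  assume d: "distinct xs" and ne: "xs \<noteq> []"
  have e: "xs = butlast xs @ [last xs]" using ne by simp
  then have "distinct (butlast xs @ [last xs])" using d by metis
  then have "last xs \<notin> set (butlast xs)" by simp
  moreover have "set xs = insert (last xs) (set (butlast xs))" using e by (metis set_append list.set(1) list.set(2) Un_empty_right Un_insert_right)
  ultimately show ?thesis by auto
qed

lemma set_butlast_nth: "set (butlast xs) = {xs ! j | j. j < length xs - 1}"
  by (auto simp: in_set_conv_nth nth_butlast; force simp: nth_butlast)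

definition good :: "nat list \<Rightarrow> bool" where
  "good xs = (\<forall>i<length xs. \<forall>j<i. (even i \<or> j \<noteq> i - 1) \<longrightarrow> xs!j < xs!i)"

lemma good_snoc:
  "good (ys @ [a]) \<longleftrightarrow> good ys \<and>
     (\<forall>j<length ys. (even (length ys) \<or> j \<noteq> length ys - 1) \<longrightarrow> ys!j < a)"
  unfolding good_def
  by (auto simp: nth_append less_Suc_eq)

lemma main:
  assumes "distinct xs" "xs \<noteq> []"
  shows "(length (foldl schroeder_insert [[hd xs]] (tl xs)) = 1 \<longleftrightarrow> good xs)
    \<and> (good xs \<longrightarrow> (\<exists>r. foldl schroeder_insert [[hd xs]] (tl xs) = [r]
          \<and> sorted r \<and> distinct r \<and> set r = set xs))"
  using assms
proof (induction xs rule: rev_induct)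
  case Nil then show ?case by simp
next
  case (snoc a ys)
  show ?case
  proof (cases "ys = []")
    case True
    then show ?thesis by (simp add: good_def)
  next
    case False
    define T where "T = foldl schroeder_insert [[hd ys]] (tl ys)"
    have hd: "hd (ys @ [a]) = hd ys" "tl (ys @ [a]) = tl ys @ [a]" using False by auto
    have TT: "foldl schroeder_insert [[hd (ys@[a])]] (tl (ys@[a])) = schroeder_insert T a"
      unfolding hd T_def by simp
    have dys: "distinct ys" "a \<notin> set ys" using snoc.prems by auto
    have IH: "(length T = 1 \<longleftrightarrow> good ys) \<and> (good ys \<longrightarrow> (\<exists>r. T = [r] \<and> sorted r \<and> distinct r \<and> set r = set ys))"
      using snoc.IH dys False T_def by simp
    have Tlen: "length T \<ge> 1"
    proof -
      have "\<And>zs t. length t \<ge> 1 \<Longrightarrow> length (foldl schroeder_insert t zs) \<ge> 1"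
      proof -
        fix zs :: "nat list" 
        show "\<And>t. length t \<ge> 1 \<Longrightarrow> length (foldl schroeder_insert t zs) \<ge> 1"
          by (induction zs) (use ins_len in \<open>auto intro: le_trans\<close>)
      qed
      then show ?thesis unfolding T_def by simp
    qed
    show ?thesis
    proof (cases "good ys")
      case False
      then have "length T \<ge> 2" using IH Tlen by auto
      then have "length (schroeder_insert T a) \<ge> 2" using ins_len[of T a] by linarith
      then show ?thesis unfolding TT using False good_snoc by auto
    next
      case True
      then obtain r where r: "T = [r]" "sorted r" "distinct r" "set r = set ys" using IH by blast
      have rne: "r \<noteq> []" using r(4) False by auto
      have ra: "a \<notin> set r" using r(4) dys by simp
      note R = row_ins[OF r(2,3) rne ra]
      have lenr: "length r = length ys" using r(3,4) dys(1) distinct_card by metis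
      have cond: "(\<forall>j<length ys. (even (length ys) \<or> j \<noteq> length ys - 1) \<longrightarrow> ys!j < a)
         \<longleftrightarrow> (\<forall>x\<in>set r. x<a) \<or> (even (length r - 1) \<and> (\<forall>x\<in>set (butlast r). x<a))"
      proof (cases "even (length ys)")
        case True
        obtain k where k: "length ys = Suc k" using False by (cases ys) auto
        have ne: "\<not> even (length r - 1)" using True lenr k by simp
        have A: "(\<forall>j<length ys. (even (length ys) \<or> j \<noteq> length ys - 1) \<longrightarrow> ys!j < a)
            \<longleftrightarrow> (\<forall>j<length ys. ys!j < a)" using True by blast
        have B: "(\<forall>x\<in>set ys. x < a) \<longleftrightarrow> (\<forall>j<length ys. ys!j < a)"
          by (rule all_set_conv_all_nth)
        show ?thesis unfolding A using B ne r(4) by blast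
      next
        case odd: False
        have gl: "\<forall>x\<in>set (butlast ys). x < last ys"
        proof
          fix x assume "x \<in> set (butlast ys)"
          then have "x \<in> {ys ! j | j. j < length ys - 1}" by (simp only: set_butlast_nth)
          then obtain j where j: "j < length ys - 1" "x = ys ! j" by blast
          have i1: "length ys - 1 < length ys" "even (length ys - 1)" using odd False by auto
          have G: "\<forall>i<length ys. \<forall>j<i. (even i \<or> j \<noteq> i - 1) \<longrightarrow> ys!j < ys!i"
            using True by (simp only: good_def)
          have "ys ! j < ys ! (length ys - 1)" using G[rule_format, OF i1(1) j(1)] i1(2) by blast
          then show "x < last ys" using j False by (simp add: last_conv_nth)
        qed
        have lr: "last r = last ys"
        proof (rule ccontr)
          assume ne: "last r \<noteq> last ys"
          have "last r \<in> set ys" using r(4) rne by (metis last_in_set)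
          then have "last r \<in> set (butlast ys)" using ne set_butlast_d[OF dys(1) False] by auto
          then have 1: "last r < last ys" using gl by auto
          have "last ys \<in> set r" using r(4) False by (metis last_in_set)
          then have "last ys \<in> set (butlast r)" using ne set_butlast_d[OF r(3) rne] by auto
          then have "last ys < last r" using sd_last[OF r(2,3) rne] by auto
          then show False using 1 by simp
        qed
        have sb: "set (butlast r) = set (butlast ys)"
          using set_butlast_d[OF dys(1) False] set_butlast_d[OF r(3) rne] lr r(4) by simp
        have e1: "even (length r - 1)" using odd lenr by simp
        have lhs: "(\<forall>j<length ys. (even (length ys) \<or> j \<noteq> length ys - 1) \<longrightarrow> ys!j < a)
            \<longleftrightarrow> (\<forall>x\<in>set (butlast ys). x < a)"
        proof -
          have "(\<forall>j<length ys. (even (length ys) \<or> j \<noteq> length ys - 1) \<longrightarrow> ys!j < a)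
             \<longleftrightarrow> (\<forall>j<length ys - 1. ys!j < a)"
          proof
            assume H: "\<forall>j<length ys. (even (length ys) \<or> j \<noteq> length ys - 1) \<longrightarrow> ys!j < a"
            show "\<forall>j<length ys - 1. ys!j < a"
            proof (intro allI impI)
              fix j assume "j < length ys - 1"
              then have "j < length ys" "j \<noteq> length ys - 1" by auto
              then show "ys!j < a" using H by blast
            qed
          next
            assume H: "\<forall>j<length ys - 1. ys!j < a"
            show "\<forall>j<length ys. (even (length ys) \<or> j \<noteq> length ys - 1) \<longrightarrow> ys!j < a"
            proof (intro allI impI)
              fix j assume "j < length ys" "even (length ys) \<or> j \<noteq> length ys - 1"
              then have "j < length ys - 1" using odd by auto
              then show "ys!j < a" using H by blast
            qed
          qed
          then show ?thesis unfolding set_butlast_nth by blast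
        qed
        show ?thesis unfolding lhs sb using e1 r(4) by (auto dest: in_set_butlastD)
      qed
      show ?thesis
      proof (cases "schroeder_row_insert r a")
        case (Pair r' b)
        show ?thesis
        proof (cases b)
          case None
          then show ?thesis unfolding TT r(1) using Pair R True cond good_snoc r(4)
            by auto
        next
          case (Some c)
          then show ?thesis unfolding TT r(1) using Pair R True cond good_snoc ins_len[of "[]" c]
            by auto
        qed
      qed
    qed
  qed
qed


lemma good_iff:
  assumes "length \<pi> = n"
  shows "good \<pi> \<longleftrightarrow>
    (\<forall>i\<in>{1..n}.
       (odd i \<longrightarrow> (\<forall>j. 1 \<le> j \<and> j < i \<longrightarrow> \<pi> ! (j - 1) < \<pi> ! (i - 1))) \<and>
       (even i \<longrightarrow> (\<forall>j. 1 \<le> j \<and> j < i \<and> j \<noteq> i - 1 \<longrightarrow> \<pi> ! (j - 1) < \<pi> ! (i - 1))))"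
proof
  assume g: "good \<pi>"
  show "\<forall>i\<in>{1..n}.
       (odd i \<longrightarrow> (\<forall>j. 1 \<le> j \<and> j < i \<longrightarrow> \<pi> ! (j - 1) < \<pi> ! (i - 1))) \<and>
       (even i \<longrightarrow> (\<forall>j. 1 \<le> j \<and> j < i \<and> j \<noteq> i - 1 \<longrightarrow> \<pi> ! (j - 1) < \<pi> ! (i - 1)))"
  proof (intro ballI conjI impI allI)
    fix i j assume i: "i \<in> {1..n}" and "odd i" and j: "1 \<le> j \<and> j < i"
    then have "i - 1 < length \<pi>" "j - 1 < i - 1" "even (i - 1)" using assms by auto
    then show "\<pi> ! (j - 1) < \<pi> ! (i - 1)" using g unfolding good_def by blast
  next
    fix i j assume i: "i \<in> {1..n}" and "even i" and j: "1 \<le> j \<and> j < i \<and> j \<noteq> i - 1"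
    then have "i - 1 < length \<pi>" "j - 1 < i - 1" "j - 1 \<noteq> i - 1 - 1" using assms by auto
    then show "\<pi> ! (j - 1) < \<pi> ! (i - 1)" using g unfolding good_def by blast
  qed
next
  assume H: "\<forall>i\<in>{1..n}.
       (odd i \<longrightarrow> (\<forall>j. 1 \<le> j \<and> j < i \<longrightarrow> \<pi> ! (j - 1) < \<pi> ! (i - 1))) \<and>
       (even i \<longrightarrow> (\<forall>j. 1 \<le> j \<and> j < i \<and> j \<noteq> i - 1 \<longrightarrow> \<pi> ! (j - 1) < \<pi> ! (i - 1)))"
  show "good \<pi>" unfolding good_def
  proof (intro allI impI)
    fix i j assume i: "i < length \<pi>" and j: "j < i" and c: "even i \<or> j \<noteq> i - 1"
    have si: "Suc i \<in> {1..n}" using i assms by auto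
    show "\<pi> ! j < \<pi> ! i"
    proof (cases "even i")
      case True
      then have "odd (Suc i)" by simp
      then have "\<forall>j'. 1 \<le> j' \<and> j' < Suc i \<longrightarrow> \<pi> ! (j' - 1) < \<pi> ! (Suc i - 1)" using H si by blast
      then show ?thesis using spec[of _ "Suc j"] j by auto
    next
      case False
      then have "even (Suc i)" "j \<noteq> i - 1" using c by auto
      then have "\<forall>j'. 1 \<le> j' \<and> j' < Suc i \<and> j' \<noteq> Suc i - 1 \<longrightarrow> \<pi> ! (j' - 1) < \<pi> ! (Suc i - 1)"
        using H si by blast
      then have "Suc j < Suc i \<and> Suc j \<noteq> Suc i - 1 \<longrightarrow> \<pi> ! j < \<pi> ! i" by (metis diff_Suc_1 le_add1 plus_1_eq_Suc)
      then show ?thesis using j \<open>j \<noteq> i - 1\<close> False by (cases i) auto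
    qed
  qed
qed

theorem mainTheorem7:
  fixes \<pi> :: "nat list" and n :: nat
  assumes "n \<ge> 1"
    and "length \<pi> = n" and "distinct \<pi>" and "set \<pi> = {1..n}"
  shows "length (schroeder_P \<pi>) = 1 \<longleftrightarrow>
    (\<forall>i\<in>{1..n}.
       (odd i \<longrightarrow> (\<forall>j. 1 \<le> j \<and> j < i \<longrightarrow> \<pi> ! (j - 1) < \<pi> ! (i - 1))) \<and>
       (even i \<longrightarrow> (\<forall>j. 1 \<le> j \<and> j < i \<and> j \<noteq> i - 1 \<longrightarrow> \<pi> ! (j - 1) < \<pi> ! (i - 1))))"
proof -
  have ne: "\<pi> \<noteq> []" using assms(1,2) by auto
  show ?thesis unfolding good_iff[OF assms(2), symmetric] schroeder_P_def
    using main[OF assms(3) ne] by blast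
qed

end
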